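(* Let $\sigma:\mathbb{R}\to\mathbb{R}$ be an increasing odd homeomorphism such that either $\sigma(x)=x$ for all $x$ in a neighborhood of $0$, or $\sigma(x)=x$ for all $x\in\mathbb{Z}$. Let $h(x,y)=(x+y,y)$, $v(x,y)=(x,x+y)$, so that $\Gamma(\mathrm{Id})=\langle h,v\rangle=\mathrm{SL}(2,\mathbb{Z})$. Then: (1) there is a surjective group morphism $\pi:\Gamma(\sigma)\to\Gamma(\mathrm{Id})$ with $\pi(w(h_\sigma,v_\sigma))=w(h,v)$ for every word $w$ in the free group on two letters; (2) the kernel of $\pi$ is the normal subgroup of $\Gamma(\sigma)$ generated by $V_\sigma^2U_\sigma^3$ and $V_\sigma^4$, where $U_\sigma=v_\sigma^{-1}h_\sigma$ and $V_\sigma=h_\sigma^{-1}v_\sigma h_\sigma^{-1}$.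
   Context: $h_\sigma(x,y)=(x+\sigma^{-1}(y),y)$, $v_\sigma(x,y)=(x,\sigma(x)+y)$, and $\Gamma(\sigma)$ is the group generated by $h_\sigma,v_\sigma$ under composition. For a word $w$ in the free group $\mathbb F(a,b)$ and elements $x,y$ of a group, $w(x,y)$ denotes the image of $w$ under the morphism $a\mapsto x$, $b\mapsto y$. *)

theory Defs
  imports "HOL-Analysis.Analysis" "HOL-Algebra.Algebra"
begin

definition hmap :: "(real \<Rightarrow> real) \<Rightarrow> real \<times> real \<Rightarrow> real \<times> real" where
  "hmap \<sigma> = (\<lambda>(x, y). (x + inv_into UNIV \<sigma> y, y))"

definition vmap :: "(real \<Rightarrow> real) \<Rightarrow> real \<times> real \<Rightarrow> real \<times> real" where
  "vmap \<sigma> = (\<lambda>(x, y). (x, \<sigma> x + y))"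

definition Gamma :: "(real \<Rightarrow> real) \<Rightarrow> (real \<times> real \<Rightarrow> real \<times> real) monoid" where
  "Gamma \<sigma> = (BijGroup (UNIV :: (real \<times> real) set))
      \<lparr>carrier := generate (BijGroup (UNIV :: (real \<times> real) set)) {hmap \<sigma>, vmap \<sigma>}\<rparr>"

(* Words of the free group F(a,b): a word is a list of letters (a or b) each
   with an exponent sign (True = inverse letter). *)
datatype letter = LA | LB

type_synonym word = "(letter \<times> bool) list"

fun eval_letter :: "('g, 'm) monoid_scheme \<Rightarrow> 'g \<Rightarrow> 'g \<Rightarrow> letter \<times> bool \<Rightarrow> 'g" where
  "eval_letter G x y (LA, False) = x"
| "eval_letter G x y (LA, True) = inv\<^bsub>G\<^esub> x"
| "eval_letter G x y (LB, False) = y"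
| "eval_letter G x y (LB, True) = inv\<^bsub>G\<^esub> y"

definition word_eval :: "('g, 'm) monoid_scheme \<Rightarrow> word \<Rightarrow> 'g \<Rightarrow> 'g \<Rightarrow> 'g" where
  "word_eval G w x y = foldr (\<lambda>l acc. eval_letter G x y l \<otimes>\<^bsub>G\<^esub> acc) w \<one>\<^bsub>G\<^esub>"

definition normal_closure :: "('g, 'm) monoid_scheme \<Rightarrow> 'g set \<Rightarrow> 'g set" where
  "normal_closure G S =
     generate G {g \<otimes>\<^bsub>G\<^esub> s \<otimes>\<^bsub>G\<^esub> inv\<^bsub>G\<^esub> g | g s. g \<in> carrier G \<and> s \<in> S}"

end

theory Submission
  imports Defs
begin


fun nfW :: "('g,'m) monoid_scheme \<Rightarrow> 'g \<Rightarrow> 'g \<Rightarrow> bool list \<Rightarrow> 'g" where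
  "nfW G U V [] = \<one>\<^bsub>G\<^esub>"
| "nfW G U V (t#ts) = V \<otimes>\<^bsub>G\<^esub> (U [^]\<^bsub>G\<^esub> (if t then 2 else 1::nat)) \<otimes>\<^bsub>G\<^esub> nfW G U V ts"

type_synonym nfd = "bool \<times> nat \<times> bool list \<times> bool"

definition nf_eval :: "('g,'m) monoid_scheme \<Rightarrow> 'g \<Rightarrow> 'g \<Rightarrow> nfd \<Rightarrow> 'g" where
  "nf_eval G U V d = (case d of (e,k,W,f) \<Rightarrow>
     V [^]\<^bsub>G\<^esub> (if e then 2 else 0::nat) \<otimes>\<^bsub>G\<^esub> U [^]\<^bsub>G\<^esub> k \<otimes>\<^bsub>G\<^esub> nfW G U V W
       \<otimes>\<^bsub>G\<^esub> V [^]\<^bsub>G\<^esub> (if f then 1 else 0::nat))"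

fun stepU :: "nfd \<Rightarrow> nfd" where
  "stepU (e,k,W,f) = (if k < 2 then (e,k+1,W,f) else (\<not>e,0,W,f))"

fun stepV :: "nfd \<Rightarrow> nfd" where
  "stepV (e,Suc k,W,f) = (e,0,(k\<noteq>0)#W,f)"
| "stepV (e,0,t#W,f) = (\<not>e, if t then 2 else 1, W, f)"
| "stepV (e,0,[],f) = (if f then (\<not>e,0,[],False) else (e,0,[],True))"

fun stepL :: "letter \<times> bool \<Rightarrow> nfd \<Rightarrow> nfd" where
  "stepL (LA,False) d = stepV (stepU (stepU d))"
| "stepL (LB,False) d = stepV (stepU d)"
| "stepL (LA,True) d = stepU (stepV d)"
| "stepL (LB,True) d = stepU (stepU (stepV d))"

fun nf :: "word \<Rightarrow> nfd" where
  "nf [] = (False,0,[],False)"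
| "nf (l#w) = stepL l (nf w)"

lemma nf_k: "fst (snd (nf w)) \<le> 2"
proof (induction w)
  case Nil then show ?case by simp
next
  case (Cons l w)
  have U: "fst (snd (stepU d)) \<le> 2" for d by (cases d) auto
  have V: "fst (snd d) \<le> 2 \<Longrightarrow> fst (snd (stepV d)) \<le> 2" for d
    by (cases d rule: stepV.cases) auto
  obtain x s where l: "l = (x,s)" by (cases l)
  show ?case using Cons U V unfolding l by (cases x; cases s) auto
qed

locale relgrp = group G for G (structure) +
  fixes a b U V
  assumes a: "a \<in> carrier G" and b: "b \<in> carrier G"
    and U_def: "U = inv b \<otimes> a" and V_def: "V = inv a \<otimes> b \<otimes> inv a"
    and R1: "V [^] (2::nat) \<otimes> U [^] (3::nat) = \<one>"
    and R2: "V [^] (4::nat) = \<one>"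
begin

lemma U[simp]: "U \<in> carrier G" and V[simp]: "V \<in> carrier G"
  using a b by (auto simp: U_def V_def)

lemma canc1: "x \<in> carrier G \<Longrightarrow> y \<in> carrier G \<Longrightarrow> x \<otimes> (inv x \<otimes> y) = y"
  by (simp add: m_assoc[symmetric])
lemma canc2: "x \<in> carrier G \<Longrightarrow> y \<in> carrier G \<Longrightarrow> inv x \<otimes> (x \<otimes> y) = y"
  by (simp add: m_assoc[symmetric])

lemma R1': "V \<otimes> (V \<otimes> (U \<otimes> (U \<otimes> U))) = \<one>"
  using R1 by (simp add: numeral_eq_Suc m_assoc)
lemma R2'[simp]: "V \<otimes> (V \<otimes> (V \<otimes> V)) = \<one>"
  using R2 by (simp add: numeral_eq_Suc m_assoc)

lemma VVVV[simp]: "x \<in> carrier G \<Longrightarrow> V \<otimes> (V \<otimes> (V \<otimes> (V \<otimes> x))) = x"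
  using R2' by (simp add: m_assoc[symmetric])

lemma UUU: "U \<otimes> (U \<otimes> U) = V \<otimes> V"
proof -
  have "U \<otimes> (U \<otimes> U) = (V \<otimes> (V \<otimes> (V \<otimes> V))) \<otimes> (U \<otimes> (U \<otimes> U))"
    by (simp add: R2')
  also have "\<dots> = V \<otimes> V \<otimes> (V \<otimes> (V \<otimes> (U \<otimes> (U \<otimes> U))))" by (simp add: m_assoc)
  also have "\<dots> = V \<otimes> V" by (simp add: R1')
  finally show ?thesis .
qed

lemma UUUx[simp]: "x \<in> carrier G \<Longrightarrow> U \<otimes> (U \<otimes> (U \<otimes> x)) = V \<otimes> (V \<otimes> x)"
  using UUU by (metis U V m_assoc m_closed)

lemma UVV[simp]: "x \<in> carrier G \<Longrightarrow> U \<otimes> (V \<otimes> (V \<otimes> x)) = V \<otimes> (V \<otimes> (U \<otimes> x))"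
proof -
  assume x: "x \<in> carrier G"
  have "U \<otimes> (V \<otimes> (V \<otimes> x)) = U \<otimes> (U \<otimes> (U \<otimes> (U \<otimes> x)))" using x by simp
  also have "\<dots> = V \<otimes> (V \<otimes> (U \<otimes> x))" using x UUUx[of "U \<otimes> x"] by (simp del: UUUx)
  finally show ?thesis .
qed

lemma inva: "inv a = U \<otimes> V"
  using a b by (simp add: U_def V_def m_assoc canc1 canc2)
lemma invb: "inv b = U \<otimes> (U \<otimes> V)"
  using a b by (simp add: U_def V_def m_assoc canc1 canc2)
lemma a_eq: "a = V \<otimes> (U \<otimes> U)"
proof -
  have "inv (U \<otimes> V) = V \<otimes> (U \<otimes> U)"
    by (rule inv_equality) (simp_all add: m_assoc)
  thus ?thesis using inva a by (metis inv_inv)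
qed
lemma b_eq: "b = V \<otimes> U"
proof -
  have "inv (U \<otimes> (U \<otimes> V)) = V \<otimes> U"
    by (rule inv_equality) (simp_all add: m_assoc)
  thus ?thesis using invb b by (metis inv_inv)
qed

lemma inva': "inv (V \<otimes> (U \<otimes> U)) = U \<otimes> V" using inva a_eq by simp
lemma invb': "inv (V \<otimes> U) = U \<otimes> (U \<otimes> V)" using invb b_eq by simp

lemma nfW_closed[simp]: "nfW G U V W \<in> carrier G"
  by (induction W) auto

lemma stepU_ok: "k \<le> 2 \<Longrightarrow> U \<otimes> nf_eval G U V (e,k,W,f) = nf_eval G U V (stepU (e,k,W,f))"
  unfolding nf_eval_def
  by (cases e; cases f; auto simp: le_Suc_eq numeral_eq_Suc m_assoc)

lemma stepV_ok: "k \<le> 2 \<Longrightarrow> V \<otimes> nf_eval G U V (e,k,W,f) = nf_eval G U V (stepV (e,k,W,f))"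
  unfolding nf_eval_def
  by (cases "(e,k,W,f)" rule: stepV.cases; cases e; cases f; auto simp: le_Suc_eq numeral_eq_Suc m_assoc)

lemma stepU_k: "fst (snd (stepU d)) \<le> 2" by (cases d) auto
lemma stepV_k: "fst (snd d) \<le> 2 \<Longrightarrow> fst (snd (stepV d)) \<le> 2"
    by (cases d rule: stepV.cases) auto

lemma stepU_ok': "fst (snd d) \<le> 2 \<Longrightarrow> U \<otimes> nf_eval G U V d = nf_eval G U V (stepU d)"
  using stepU_ok by (cases d) auto
lemma stepV_ok': "fst (snd d) \<le> 2 \<Longrightarrow> V \<otimes> nf_eval G U V d = nf_eval G U V (stepV d)"
  using stepV_ok by (cases d) auto

lemma nf_eval_closed[simp]: "nf_eval G U V d \<in> carrier G"
  by (cases d) (simp add: nf_eval_def)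

lemma word_nf: "word_eval G w a b = nf_eval G U V (nf w)"
proof (induction w)
  case Nil then show ?case by (simp add: word_eval_def nf_eval_def)
next
  case (Cons l w)
  have IH: "word_eval G (l#w) a b = eval_letter G a b l \<otimes> nf_eval G U V (nf w)"
    using Cons by (simp add: word_eval_def)
  have k: "fst (snd (nf w)) \<le> 2" by (rule nf_k)
  obtain x s where l: "l = (x,s)" by (cases l)
  show ?case using IH k stepU_k stepV_k
    by (cases x; cases s; simp add: l a_eq b_eq inva' invb' inva invb m_assoc stepU_ok' stepV_ok')
qed

end


definition hinv :: "(real \<Rightarrow> real) \<Rightarrow> real \<times> real \<Rightarrow> real \<times> real" where
  "hinv \<sigma> = (\<lambda>(x, y). (x - inv_into UNIV \<sigma> y, y))"
definition vinv :: "(real \<Rightarrow> real) \<Rightarrow> real \<times> real \<Rightarrow> real \<times> real" where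
  "vinv \<sigma> = (\<lambda>(x, y). (x, y - \<sigma> x))"

lemma letter_cases: "P (LA,False) \<Longrightarrow> P (LA,True) \<Longrightarrow> P (LB,False) \<Longrightarrow> P (LB,True) \<Longrightarrow> P l"
  by (cases l) (metis (full_types) letter.exhaust)

fun lf :: "(real \<Rightarrow> real) \<Rightarrow> letter \<times> bool \<Rightarrow> real \<times> real \<Rightarrow> real \<times> real" where
  "lf \<sigma> (LA,False) = hmap \<sigma>"
| "lf \<sigma> (LA,True) = hinv \<sigma>"
| "lf \<sigma> (LB,False) = vmap \<sigma>"
| "lf \<sigma> (LB,True) = vinv \<sigma>"

definition wfn :: "(real \<Rightarrow> real) \<Rightarrow> word \<Rightarrow> real \<times> real \<Rightarrow> real \<times> real" where
  "wfn \<sigma> w = foldr (\<lambda>l acc. lf \<sigma> l \<circ> acc) w id"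

lemma wf_Nil[simp]: "wfn \<sigma> [] = id" and wf_Cons[simp]: "wfn \<sigma> (l#w) = lf \<sigma> l \<circ> wfn \<sigma> w"
  by (simp_all add: wfn_def)

lemma wf_append: "wfn \<sigma> (w1 @ w2) = wfn \<sigma> w1 \<circ> wfn \<sigma> w2"
  by (induction w1) auto

lemma hinv_hmap: "hinv \<sigma> (hmap \<sigma> p) = p" "hmap \<sigma> (hinv \<sigma> p) = p"
  by (cases p; simp add: hinv_def hmap_def)+
lemma vinv_vmap: "vinv \<sigma> (vmap \<sigma> p) = p" "vmap \<sigma> (vinv \<sigma> p) = p"
  by (cases p; simp add: vinv_def vmap_def)+

abbreviation BG :: "(real \<times> real \<Rightarrow> real \<times> real) monoid" where
  "BG \<equiv> BijGroup (UNIV :: (real \<times> real) set)"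

lemma bij_Bij: "bij f \<Longrightarrow> f \<in> Bij UNIV"
  by (simp add: Bij_def)

lemma hmap_Bij: "hmap \<sigma> \<in> Bij UNIV" and vmap_Bij: "vmap \<sigma> \<in> Bij UNIV"
  and hinv_Bij: "hinv \<sigma> \<in> Bij UNIV" and vinv_Bij: "vinv \<sigma> \<in> Bij UNIV"
  by (rule bij_Bij, rule o_bij[where g = "hinv \<sigma>"] o_bij[where g = "hmap \<sigma>"]
      o_bij[where g = "vinv \<sigma>"] o_bij[where g = "vmap \<sigma>"];
      simp add: fun_eq_iff hinv_hmap vinv_vmap)+

lemma inv_hmap: "inv_into UNIV (hmap \<sigma>) = hinv \<sigma>"
  by (rule inv_equality) (simp_all add: hinv_hmap)
lemma inv_vmap: "inv_into UNIV (vmap \<sigma>) = vinv \<sigma>"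
  by (rule inv_equality) (simp_all add: vinv_vmap)

lemma BG_mult: "x \<in> Bij UNIV \<Longrightarrow> y \<in> Bij UNIV \<Longrightarrow> x \<otimes>\<^bsub>BG\<^esub> y = x \<circ> y"
  by (simp add: BijGroup_def compose_def restrict_UNIV comp_def)
lemma BG_one: "\<one>\<^bsub>BG\<^esub> = id"
  by (simp add: BijGroup_def restrict_UNIV id_def)
lemma BG_inv: "x \<in> Bij UNIV \<Longrightarrow> inv\<^bsub>BG\<^esub> x = inv_into UNIV x"
  by (simp add: inv_BijGroup restrict_UNIV)
lemma BG_carrier: "carrier BG = Bij UNIV" by (simp add: BijGroup_def)

lemma carrier_Gamma: "carrier (Gamma \<sigma>) = generate BG {hmap \<sigma>, vmap \<sigma>}"
  by (simp add: Gamma_def)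

lemma sub_Gamma: "subgroup (carrier (Gamma \<sigma>)) BG"
  unfolding carrier_Gamma
  by (rule group.generate_is_subgroup[OF group_BijGroup]) (simp add: BG_carrier hmap_Bij vmap_Bij)

lemma group_Gamma: "group (Gamma \<sigma>)"
  unfolding Gamma_def using group.subgroup_imp_group[OF group_BijGroup sub_Gamma]
  by (simp add: Gamma_def)

lemma Gamma_Bij: "x \<in> carrier (Gamma \<sigma>) \<Longrightarrow> x \<in> Bij UNIV"
  using subgroup.subset[OF sub_Gamma] BG_carrier by auto

lemma Gamma_mult: "x \<in> carrier (Gamma \<sigma>) \<Longrightarrow> y \<in> carrier (Gamma \<sigma>) \<Longrightarrow> x \<otimes>\<^bsub>Gamma \<sigma>\<^esub> y = x \<circ> y"
  using BG_mult Gamma_Bij by (simp add: Gamma_def)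
lemma Gamma_one: "\<one>\<^bsub>Gamma \<sigma>\<^esub> = id"
  using BG_one by (simp add: Gamma_def)
lemma Gamma_inv: "x \<in> carrier (Gamma \<sigma>) \<Longrightarrow> inv\<^bsub>Gamma \<sigma>\<^esub> x = inv_into UNIV x"
proof -
  assume x: "x \<in> carrier (Gamma \<sigma>)"
  have "inv\<^bsub>Gamma \<sigma>\<^esub> x = inv\<^bsub>BG\<^esub> x"
    using group.m_inv_consistent[OF group_BijGroup sub_Gamma] x by (simp add: Gamma_def)
  thus ?thesis using BG_inv Gamma_Bij x by simp
qed

lemma hmap_G: "hmap \<sigma> \<in> carrier (Gamma \<sigma>)" and vmap_G: "vmap \<sigma> \<in> carrier (Gamma \<sigma>)"
  by (simp_all add: carrier_Gamma generate.incl)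

lemma hinv_G: "hinv \<sigma> \<in> carrier (Gamma \<sigma>)"
proof -
  have "inv\<^bsub>Gamma \<sigma>\<^esub> (hmap \<sigma>) \<in> carrier (Gamma \<sigma>)"
    using group.inv_closed[OF group_Gamma hmap_G] .
  thus ?thesis using Gamma_inv[OF hmap_G] inv_hmap by simp
qed
lemma vinv_G: "vinv \<sigma> \<in> carrier (Gamma \<sigma>)"
proof -
  have "inv\<^bsub>Gamma \<sigma>\<^esub> (vmap \<sigma>) \<in> carrier (Gamma \<sigma>)"
    using group.inv_closed[OF group_Gamma vmap_G] .
  thus ?thesis using Gamma_inv[OF vmap_G] inv_vmap by simp
qed

lemma lf_G: "lf \<sigma> l \<in> carrier (Gamma \<sigma>)"
  by (induct l rule: letter_cases) (simp_all add: hmap_G vmap_G hinv_G vinv_G)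

lemma wf_G: "wfn \<sigma> w \<in> carrier (Gamma \<sigma>)"
proof (induction w)
  case Nil then show ?case using generate.one[of BG "{hmap \<sigma>, vmap \<sigma>}"] by (simp add: carrier_Gamma BG_one id_def)
next
  case (Cons l w)
  then show ?case using monoid.m_closed[OF group.is_monoid[OF group_Gamma] lf_G Cons] Gamma_mult[OF lf_G Cons] by (simp only: wf_Cons)
qed

lemma eval_letter_Gamma: "eval_letter (Gamma \<sigma>) (hmap \<sigma>) (vmap \<sigma>) l = lf \<sigma> l"
  by (induct l rule: letter_cases) (simp_all add: Gamma_inv hmap_G vmap_G inv_hmap inv_vmap)

lemma word_eval_Gamma: "word_eval (Gamma \<sigma>) w (hmap \<sigma>) (vmap \<sigma>) = wfn \<sigma> w"
proof (induction w)
  case Nil then show ?case by (simp add: word_eval_def Gamma_one)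
next
  case (Cons l w)
  have "word_eval (Gamma \<sigma>) (l#w) (hmap \<sigma>) (vmap \<sigma>) = lf \<sigma> l \<otimes>\<^bsub>Gamma \<sigma>\<^esub> wfn \<sigma> w"
    using Cons by (simp add: word_eval_def eval_letter_Gamma)
  then show ?case using Gamma_mult[OF lf_G wf_G] by simp
qed

lemma Gamma_words: "g \<in> carrier (Gamma \<sigma>) \<Longrightarrow> \<exists>w. g = wfn \<sigma> w"
  unfolding carrier_Gamma
proof (induction rule: generate.induct)
  case one then show ?case by (rule exI[of _ "[]"]) (simp add: BG_one)
next
  case (incl h) then show ?case
    by (auto intro: exI[of _ "[(LA,False)]"] exI[of _ "[(LB,False)]"])
next
  case (inv h) then show ?case
    by (auto simp: BG_inv hmap_Bij vmap_Bij inv_hmap inv_vmap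
        intro: exI[of _ "[(LA,True)]"] exI[of _ "[(LB,True)]"])
next
  case (eng h1 h2)
  then obtain w1 w2 where "h1 = wfn \<sigma> w1" "h2 = wfn \<sigma> w2" by blast
  then show ?case using BG_mult[OF Gamma_Bij[OF wf_G] Gamma_Bij[OF wf_G]]
    by (auto simp: wf_append intro: exI[of _ "w1 @ w2"])
qed

lemma word_eval_append:
  assumes "group G" "x \<in> carrier G" "y \<in> carrier G"
  shows "word_eval G (w1 @ w2) x y = word_eval G w1 x y \<otimes>\<^bsub>G\<^esub> word_eval G w2 x y"
    and "word_eval G w1 x y \<in> carrier G"
proof -
  interpret group G by fact
  have lc: "eval_letter G x y l \<in> carrier G" for l
    using assms by (induct l rule: letter_cases) auto
  show c: "word_eval G w1 x y \<in> carrier G" for w1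
    by (induction w1) (auto simp: word_eval_def lc)
  show "word_eval G (w1 @ w2) x y = word_eval G w1 x y \<otimes>\<^bsub>G\<^esub> word_eval G w2 x y"
    by (induction w1) (auto simp: word_eval_def lc c[unfolded word_eval_def] m_assoc)
qed

lemma hom_word_eval:
  assumes "group_hom G H \<phi>" "x \<in> carrier G" "y \<in> carrier G"
  shows "\<phi> (word_eval G w x y) = word_eval H w (\<phi> x) (\<phi> y)"
proof -
  interpret group_hom G H \<phi> by fact
  have lc: "eval_letter G x y l \<in> carrier G" for l
    using assms by (induct l rule: letter_cases) auto
  have le: "\<phi> (eval_letter G x y l) = eval_letter H (\<phi> x) (\<phi> y) l" for l
    using assms by (induct l rule: letter_cases) auto
  show ?thesis
    by (induction w) (auto simp: word_eval_def lc le word_eval_append(2)[OF G.is_group assms(2,3), unfolded word_eval_def])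
qed



lemma lf_id: "lf id (LA,False) (x,y) = (x+y,y)" "lf id (LA,True) (x,y) = (x-y,y)"
  "lf id (LB,False) (x,y) = (x,x+y)" "lf id (LB,True) (x,y) = (x,y-x)"
  by (simp_all add: hmap_def vmap_def hinv_def vinv_def)

lemma wfn_id_lin: "\<exists>a b c d::int. \<forall>x y. wfn id w (x,y) = (of_int a*x + of_int b*y, of_int c*x + of_int d*y)"
proof (induction w)
  case Nil show ?case by (rule exI[of _ 1], rule exI[of _ 0], rule exI[of _ 0], rule exI[of _ 1]) simp
next
  case (Cons l w)
  then obtain a b c d :: int where H: "\<And>x y. wfn id w (x,y) = (of_int a*x + of_int b*y, of_int c*x + of_int d*y)" by blast
  have "\<exists>a' b' c' d'::int. \<forall>x y. lf id l (wfn id w (x,y)) = (of_int a'*x + of_int b'*y, of_int c'*x + of_int d'*y)"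
  proof (induct l rule: letter_cases)
    case 1 show ?case
      by (rule exI[of _ "a + c"], rule exI[of _ "b + d"], rule exI[of _ c], rule exI[of _ d]) (simp add: H[unfolded id_def] id_def hmap_def vmap_def hinv_def vinv_def algebra_simps)
  next
    case 2 show ?case
      by (rule exI[of _ "a - c"], rule exI[of _ "b - d"], rule exI[of _ c], rule exI[of _ d]) (simp add: H[unfolded id_def] id_def hmap_def vmap_def hinv_def vinv_def algebra_simps)
  next
    case 3 show ?case
      by (rule exI[of _ "a"], rule exI[of _ "b"], rule exI[of _ "a + c"], rule exI[of _ "b + d"]) (simp add: H[unfolded id_def] id_def hmap_def vmap_def hinv_def vinv_def algebra_simps)
  next
    case 4 show ?case
      by (rule exI[of _ "a"], rule exI[of _ "b"], rule exI[of _ "c - a"], rule exI[of _ "d - b"]) (simp add: H[unfolded id_def] id_def hmap_def vmap_def hinv_def vinv_def algebra_simps)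
  qed
  then show ?case by (simp add: id_def)
qed

lemma agree_int:
  assumes s: "\<And>y. y \<in> \<int> \<Longrightarrow> inv_into UNIV \<sigma> y = y" and t: "\<And>x. x \<in> \<int> \<Longrightarrow> \<sigma> x = x"
    and xy: "x \<in> \<int>" "y \<in> \<int>"
  shows "wfn \<sigma> w (x,y) = wfn id w (x,y) \<and> fst (wfn id w (x,y)) \<in> \<int> \<and> snd (wfn id w (x,y)) \<in> \<int>"
proof (induction w)
  case Nil then show ?case using xy by simp
next
  case (Cons l w)
  then obtain p q where pq: "wfn \<sigma> w (x,y) = (p,q)" "wfn id w (x,y) = (p,q)" "p \<in> \<int>" "q \<in> \<int>"
    by (metis prod.collapse)
  show ?case using pq s t
    by (induct l rule: letter_cases) (simp_all add: hmap_def vmap_def hinv_def vinv_def)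
qed

lemma agree_small:
  assumes e: "\<epsilon> > 0" and s: "\<And>y. \<bar>y\<bar> < \<epsilon> \<Longrightarrow> inv_into UNIV \<sigma> y = y"
    and t: "\<And>x. \<bar>x\<bar> < \<epsilon> \<Longrightarrow> \<sigma> x = x"
  shows "\<exists>\<delta>>0. \<forall>x y. \<bar>x\<bar> < \<delta> \<longrightarrow> \<bar>y\<bar> < \<delta> \<longrightarrow> wfn \<sigma> w (x,y) = wfn id w (x,y)"
proof (induction w)
  case Nil then show ?case by (auto intro: exI[of _ 1])
next
  case (Cons l w)
  then obtain \<delta> where d: "\<delta> > 0" "\<And>x y. \<bar>x\<bar> < \<delta> \<Longrightarrow> \<bar>y\<bar> < \<delta> \<Longrightarrow> wfn \<sigma> w (x,y) = wfn id w (x,y)"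
    by blast
  obtain a b c d :: int where H: "\<And>x y. wfn id w (x,y) = (of_int a*x + of_int b*y, of_int c*x + of_int d*y)"
    using wfn_id_lin by blast
  define M where "M = \<bar>real_of_int a\<bar> + \<bar>of_int b\<bar> + \<bar>of_int c\<bar> + \<bar>of_int d\<bar> + 1"
  have M: "M \<ge> 1" unfolding M_def by simp
  define \<delta>' where "\<delta>' = min \<delta> (\<epsilon> / M)"
  have d': "\<delta>' > 0" using d e M by (simp add: \<delta>'_def)
  have bound: "\<bar>of_int a*x + of_int b*y\<bar> < \<epsilon> \<and> \<bar>of_int c*x + of_int d*y\<bar> < \<epsilon>"
    if "\<bar>x\<bar> < \<delta>'" "\<bar>y\<bar> < \<delta>'" for x y
  proof -
    have "\<delta>' * M \<le> \<epsilon>" using M e by (simp add: \<delta>'_def min_def field_simps split: if_splits)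
    have ax: "\<bar>of_int a*x\<bar> \<le> \<bar>of_int a\<bar> * \<delta>'" using that by (simp add: abs_mult mult_left_mono)
    have bx: "\<bar>of_int b*y\<bar> \<le> \<bar>of_int b\<bar> * \<delta>'" using that by (simp add: abs_mult mult_left_mono)
    have cx: "\<bar>of_int c*x\<bar> \<le> \<bar>of_int c\<bar> * \<delta>'" using that by (simp add: abs_mult mult_left_mono)
    have dx: "\<bar>of_int d*y\<bar> \<le> \<bar>of_int d\<bar> * \<delta>'" using that by (simp add: abs_mult mult_left_mono)
    have "(\<bar>real_of_int a\<bar> + \<bar>of_int b\<bar> + \<bar>of_int c\<bar> + \<bar>of_int d\<bar>) * \<delta>' < M * \<delta>'"
      using d' unfolding M_def by simp
    then show ?thesis using ax bx cx dx \<open>\<delta>' * M \<le> \<epsilon>\<close>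
      by (smt (verit, best) abs_triangle_ineq distrib_right mult.commute)
  qed
  show ?case
  proof (rule exI[of _ \<delta>'], intro conjI allI impI)
    show "\<delta>' > 0" by fact
    fix x y assume xy: "\<bar>x\<bar> < \<delta>'" "\<bar>y\<bar> < \<delta>'"
    have "\<bar>x\<bar> < \<delta>" "\<bar>y\<bar> < \<delta>" using xy by (auto simp: \<delta>'_def)
    hence eq: "wfn \<sigma> w (x,y) = wfn id w (x,y)" using d by blast
    obtain p q where pq: "wfn id w (x,y) = (p,q)" "\<bar>p\<bar> < \<epsilon>" "\<bar>q\<bar> < \<epsilon>"
      using bound[OF xy] H by auto
    show "wfn \<sigma> (l # w) (x, y) = wfn id (l # w) (x, y)"
      using eq pq s t by (induct l rule: letter_cases) (simp_all add: hmap_def vmap_def hinv_def vinv_def)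
  qed
qed



lemma wd:
  assumes A: "\<exists>t>0. wfn \<sigma> w1 (t,0) = wfn id w1 (t,0) \<and> wfn \<sigma> w1 (0,t) = wfn id w1 (0,t)
       \<and> wfn \<sigma> w2 (t,0) = wfn id w2 (t,0) \<and> wfn \<sigma> w2 (0,t) = wfn id w2 (0,t)"
    and eq: "wfn \<sigma> w1 = wfn \<sigma> w2"
  shows "wfn id w1 = wfn id w2"
proof -
  obtain t where t: "t > 0" "wfn \<sigma> w1 (t,0) = wfn id w1 (t,0)" "wfn \<sigma> w1 (0,t) = wfn id w1 (0,t)"
       "wfn \<sigma> w2 (t,0) = wfn id w2 (t,0)" "wfn \<sigma> w2 (0,t) = wfn id w2 (0,t)" using A by blast
  obtain a1 b1 c1 d1 :: int where H1: "\<And>x y. wfn id w1 (x,y) = (of_int a1*x + of_int b1*y, of_int c1*x + of_int d1*y)"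
    using wfn_id_lin by blast
  obtain a2 b2 c2 d2 :: int where H2: "\<And>x y. wfn id w2 (x,y) = (of_int a2*x + of_int b2*y, of_int c2*x + of_int d2*y)"
    using wfn_id_lin by blast
  have "wfn id w1 (t,0) = wfn id w2 (t,0)" "wfn id w1 (0,t) = wfn id w2 (0,t)"
    using t eq by metis+
  hence "of_int a1 * t = of_int a2 * t" "of_int c1 * t = of_int c2 * t"
        "of_int b1 * t = of_int b2 * t" "of_int d1 * t = of_int d2 * t"
    by (simp_all add: H1 H2)
  hence "a1 = a2" "b1 = b2" "c1 = c2" "d1 = d2" using t(1) by simp_all
  thus ?thesis by (intro ext) (auto simp: H1 H2 split: prod.splits)
qed

lemma agree_cond:
  assumes incr: "strict_mono \<sigma>"
    and fix0: "(\<exists>\<epsilon>>0. \<forall>x. \<bar>x\<bar> < \<epsilon> \<longrightarrow> \<sigma> x = x) \<or> (\<forall>n::int. \<sigma> (of_int n) = of_int n)"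
  shows "\<exists>t>0. wfn \<sigma> w1 (t,0) = wfn id w1 (t,0) \<and> wfn \<sigma> w1 (0,t) = wfn id w1 (0,t)
       \<and> wfn \<sigma> w2 (t,0) = wfn id w2 (t,0) \<and> wfn \<sigma> w2 (0,t) = wfn id w2 (0,t)"
proof -
  have inj: "inj \<sigma>" using incr strict_mono_imp_inj_on by blast
  have sfix: "inv_into UNIV \<sigma> y = y" if "\<sigma> y = y" for y
    using inv_into_f_f[OF inj, of y] that by simp
  from fix0 show ?thesis
  proof
    assume "\<exists>\<epsilon>>0. \<forall>x. \<bar>x\<bar> < \<epsilon> \<longrightarrow> \<sigma> x = x"
    then obtain \<epsilon> where e: "\<epsilon> > 0" "\<And>x. \<bar>x\<bar> < \<epsilon> \<Longrightarrow> \<sigma> x = x" by blast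
    have s: "\<And>y. \<bar>y\<bar> < \<epsilon> \<Longrightarrow> inv_into UNIV \<sigma> y = y" using e sfix by blast
    obtain d1 where d1: "d1 > 0" "\<And>x y. \<bar>x\<bar> < d1 \<Longrightarrow> \<bar>y\<bar> < d1 \<Longrightarrow> wfn \<sigma> w1 (x,y) = wfn id w1 (x,y)"
      using agree_small[OF e(1) s e(2), of w1] by blast
    obtain d2 where d2: "d2 > 0" "\<And>x y. \<bar>x\<bar> < d2 \<Longrightarrow> \<bar>y\<bar> < d2 \<Longrightarrow> wfn \<sigma> w2 (x,y) = wfn id w2 (x,y)"
      using agree_small[OF e(1) s e(2), of w2] by blast
    define t where "t = min d1 d2 / 2"
    have t: "t > 0" "t < d1" "t < d2" using d1 d2 by (auto simp: t_def min_def)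
    show ?thesis using t d1 d2 by (intro exI[of _ t]) auto
  next
    assume i: "\<forall>n::int. \<sigma> (of_int n) = of_int n"
    have t: "\<And>x. x \<in> \<int> \<Longrightarrow> \<sigma> x = x" using i by (auto elim: Ints_cases)
    have s: "\<And>y. y \<in> \<int> \<Longrightarrow> inv_into UNIV \<sigma> y = y" using t sfix by blast
    show ?thesis using agree_int[OF s t, of 1 0] agree_int[OF s t, of 0 1]
      by (intro exI[of _ 1]) auto
  qed
qed

definition Uf :: "real \<times> real \<Rightarrow> real \<times> real" where "Uf = (\<lambda>(x,y). (x+y, -x))"
definition Vf :: "real \<times> real \<Rightarrow> real \<times> real" where "Vf = (\<lambda>(x,y). (-y, x))"

lemma pow_Gamma: "x \<in> carrier (Gamma \<sigma>) \<Longrightarrow> x [^]\<^bsub>Gamma \<sigma>\<^esub> (n::nat) = x ^^ n"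
proof (induction n)
  case 0 then show ?case by (simp add: Gamma_one)
next
  case (Suc n)
  have "x [^]\<^bsub>Gamma \<sigma>\<^esub> n \<in> carrier (Gamma \<sigma>)"
    using monoid.nat_pow_closed[OF group.is_monoid[OF group_Gamma] Suc.prems] .
  then show ?case using Suc by (simp add: Gamma_mult funpow_swap1)
qed

lemma U_Gid: "inv\<^bsub>Gamma id\<^esub> (vmap id) \<otimes>\<^bsub>Gamma id\<^esub> hmap id = Uf"
  using Gamma_mult[OF vinv_G hmap_G, of id]
  by (auto simp: Gamma_inv vmap_G inv_vmap Uf_def hmap_def vinv_def fun_eq_iff)

lemma V_Gid: "inv\<^bsub>Gamma id\<^esub> (hmap id) \<otimes>\<^bsub>Gamma id\<^esub> vmap id \<otimes>\<^bsub>Gamma id\<^esub> inv\<^bsub>Gamma id\<^esub> (hmap id) = Vf"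
  using Gamma_mult[OF hinv_G vmap_G, of id] Gamma_mult[OF monoid.m_closed[OF group.is_monoid[OF group_Gamma] hinv_G vmap_G] hinv_G, of id]
  by (auto simp: Gamma_inv hmap_G inv_hmap Vf_def vmap_def hinv_def fun_eq_iff)

lemma Uf_G: "Uf \<in> carrier (Gamma id)"
  using monoid.m_closed[OF group.is_monoid[OF group_Gamma] vinv_G hmap_G, of id] U_Gid
    Gamma_inv[OF vmap_G, of id] inv_vmap Gamma_mult[OF vinv_G hmap_G, of id] by simp
lemma Vf_G: "Vf \<in> carrier (Gamma id)"
proof -
  have "inv\<^bsub>Gamma id\<^esub> (hmap id) \<otimes>\<^bsub>Gamma id\<^esub> vmap id \<otimes>\<^bsub>Gamma id\<^esub> inv\<^bsub>Gamma id\<^esub> (hmap id) \<in> carrier (Gamma id)"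
    using group_Gamma[of id] hmap_G[of id] vmap_G[of id] by (simp add: group.inv_closed group.is_monoid monoid.m_closed)
  thus ?thesis using V_Gid by simp
qed

lemma relgrp_Gid: "relgrp (Gamma id) (hmap id) (vmap id) Uf Vf"
proof -
  have p2: "Vf [^]\<^bsub>Gamma id\<^esub> (2::nat) = Vf ^^ 2" by (rule pow_Gamma[OF Vf_G])
  have p4: "Vf [^]\<^bsub>Gamma id\<^esub> (4::nat) = Vf ^^ 4" by (rule pow_Gamma[OF Vf_G])
  have p3: "Uf [^]\<^bsub>Gamma id\<^esub> (3::nat) = Uf ^^ 3" by (rule pow_Gamma[OF Uf_G])
  have c2: "Vf ^^ 2 \<in> carrier (Gamma id)"
    using monoid.nat_pow_closed[OF group.is_monoid[OF group_Gamma] Vf_G, of 2] p2 by simp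
  have c3: "Uf ^^ 3 \<in> carrier (Gamma id)"
    using monoid.nat_pow_closed[OF group.is_monoid[OF group_Gamma] Uf_G, of 3] p3 by simp
  have R1: "Vf [^]\<^bsub>Gamma id\<^esub> (2::nat) \<otimes>\<^bsub>Gamma id\<^esub> Uf [^]\<^bsub>Gamma id\<^esub> (3::nat) = \<one>\<^bsub>Gamma id\<^esub>"
    unfolding p2 p3 Gamma_mult[OF c2 c3] Gamma_one
    by (simp add: numeral_eq_Suc fun_eq_iff Uf_def Vf_def)
  have R2: "Vf [^]\<^bsub>Gamma id\<^esub> (4::nat) = \<one>\<^bsub>Gamma id\<^esub>"
    unfolding p4 Gamma_one
    by (simp add: numeral_eq_Suc fun_eq_iff Vf_def)
  show ?thesis
    by (intro relgrp.intro relgrp_axioms.intro group_Gamma) (simp_all add: hmap_G vmap_G U_Gid V_Gid R1 R2)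
qed



definition Pw :: "bool list \<Rightarrow> real \<times> real \<Rightarrow> real \<times> real" where
  "Pw W = foldr (\<lambda>t acc. (if t then (\<lambda>(x,y). (x+y,y)) else (\<lambda>(x,y). (x,x+y))) \<circ> acc) W id"

lemma Pw_Nil[simp]: "Pw [] = id" and Pw_Cons[simp]: "Pw (t#W) = (if t then (\<lambda>(x,y). (x+y,y)) else (\<lambda>(x,y). (x,x+y))) \<circ> Pw W"
  by (simp_all add: Pw_def)

lemma Pw_mono: "0 \<le> x \<Longrightarrow> 0 \<le> y \<Longrightarrow> x \<le> fst (Pw W (x,y)) \<and> y \<le> snd (Pw W (x,y))"
proof (induction W)
  case Nil then show ?case by simp
next
  case (Cons t W)
  obtain p q where "Pw W (x,y) = (p,q)" by (cases "Pw W (x,y)")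
  then show ?case using Cons by auto
qed

lemma Pw_big: "W \<noteq> [] \<Longrightarrow> fst (Pw W (1,1)) + snd (Pw W (1,1)) \<ge> 3"
proof (cases W)
  case (Cons t W')
  obtain p q where pq: "Pw W' (1,1) = (p,q)" by (cases "Pw W' (1,1)")
  have "1 \<le> p" "1 \<le> q" using Pw_mono[of 1 1 W'] pq by auto
  then show ?thesis using Cons pq by auto
qed simp

lemma nfW_Gid: "nfW (Gamma id) Uf Vf W = Pw W"
proof (induction W)
  case Nil then show ?case by (simp add: Gamma_one)
next
  case (Cons t W)
  have IH: "nfW (Gamma id) Uf Vf W = Pw W" using Cons.IH by (simp add: id_def)
  interpret relgrp "Gamma id" "hmap id" "vmap id" Uf Vf by (rule relgrp_Gid)
  have pk: "Uf [^]\<^bsub>Gamma id\<^esub> (if t then 2 else 1::nat) = Uf ^^ (if t then 2 else 1)"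
    by (rule pow_Gamma[OF Uf_G])
  have ck: "Uf ^^ (if t then 2 else 1) \<in> carrier (Gamma id)"
    using nat_pow_closed[OF Uf_G, of "if t then 2 else 1"] pk by simp
  have cW: "Pw W \<in> carrier (Gamma id)" using nfW_closed[of W] IH by simp
  have "nfW (Gamma id) Uf Vf (t#W) = Vf \<circ> (Uf ^^ (if t then 2 else 1)) \<circ> Pw W"
    using IH Gamma_mult[OF Vf_G ck] Gamma_mult[OF m_closed[OF Vf_G ck] cW] pk by simp
  also have "\<dots> = Pw (t#W)"
    by (cases t) (auto simp: fun_eq_iff Uf_def Vf_def numeral_eq_Suc split: prod.splits)
  finally show ?case .
qed

lemma nf_eval_Gid: "nf_eval (Gamma id) Uf Vf (e,k,W,f) =
    (Vf ^^ (if e then 2 else 0)) \<circ> (Uf ^^ k) \<circ> Pw W \<circ> (Vf ^^ (if f then 1 else 0))"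
proof -
  interpret relgrp "Gamma id" "hmap id" "vmap id" Uf Vf by (rule relgrp_Gid)
  have p1: "Vf [^]\<^bsub>Gamma id\<^esub> (if e then 2 else 0::nat) = Vf ^^ (if e then 2 else 0)"
    by (rule pow_Gamma[OF Vf_G])
  have p2: "Uf [^]\<^bsub>Gamma id\<^esub> k = Uf ^^ k"
    by (rule pow_Gamma[OF Uf_G])
  have p3: "Vf [^]\<^bsub>Gamma id\<^esub> (if f then 1 else 0::nat) = Vf ^^ (if f then 1 else 0)"
    by (rule pow_Gamma[OF Vf_G])
  have c1: "Vf ^^ (if e then 2 else 0) \<in> carrier (Gamma id)" using p1 nat_pow_closed[OF Vf_G] by metis
  have c2: "Uf ^^ k \<in> carrier (Gamma id)" using p2 nat_pow_closed[OF Uf_G] by metis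
  have c3: "Vf ^^ (if f then 1 else 0) \<in> carrier (Gamma id)" using p3 nat_pow_closed[OF Vf_G] by metis
  have cW: "Pw W \<in> carrier (Gamma id)" using nfW_closed[of W] nfW_Gid by simp
  show ?thesis
    unfolding nf_eval_def prod.case p1 p2 p3 nfW_Gid
    using Gamma_mult[OF c1 c2] Gamma_mult[OF m_closed[OF c1 c2] cW]
      Gamma_mult[OF m_closed[OF m_closed[OF c1 c2] cW] c3] by simp
qed

lemma nf_trivial:
  assumes eq: "nf_eval (Gamma id) Uf Vf (e,k,W,f) = id" and k: "k \<le> 2"
  shows "e = False \<and> k = 0 \<and> W = [] \<and> f = False"
proof -
  have E: "(Vf ^^ (if e then 2 else 0)) ((Uf ^^ k) (Pw W ((Vf ^^ (if f then 1 else 0)) p))) = p" for p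
    using eq unfolding nf_eval_Gid by (metis comp_apply id_apply)
  have e1: "(Vf ^^ (if e then 2 else 0)) ((Uf ^^ k) (Pw W (1,0))) = (if f then (0,-1) else (1,0))"
    using E[of "if f then (0,-1) else (1,0)"] by (cases f) (simp_all add: Vf_def)
  have e2: "(Vf ^^ (if e then 2 else 0)) ((Uf ^^ k) (Pw W (0,1))) = (if f then (1,0) else (0,1))"
    using E[of "if f then (1,0) else (0,1)"] by (cases f) (simp_all add: Vf_def)
  have e3: "(Vf ^^ (if e then 2 else 0)) ((Uf ^^ k) (Pw W (1,1))) = (if f then (1,-1) else (1,1))"
    using E[of "if f then (1,-1) else (1,1)"] by (cases f) (simp_all add: Vf_def)
  obtain a1 a2 where A: "Pw W (1,0) = (a1,a2)" by (cases "Pw W (1,0)")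
  obtain b1 b2 where B: "Pw W (0,1) = (b1,b2)" by (cases "Pw W (0,1)")
  obtain c1 c2 where C: "Pw W (1,1) = (c1,c2)" by (cases "Pw W (1,1)")
  have ia: "1 \<le> a1" "0 \<le> a2" using Pw_mono[of 1 0 W] A by auto
  have ib: "0 \<le> b1" "1 \<le> b2" using Pw_mono[of 0 1 W] B by auto
  have ic: "1 \<le> c1" "1 \<le> c2" using Pw_mono[of 1 1 W] C by auto
  have kk: "k = 0 \<or> k = 1 \<or> k = 2" using k by auto
  have W: "W = []"
  proof (rule ccontr)
    assume "W \<noteq> []"
    hence big: "c1 + c2 \<ge> 3" using Pw_big C by fastforce
    show False using e1 e2 e3 kk ia ib ic big unfolding A B C
      by (cases e; cases f; auto simp: Uf_def Vf_def numeral_eq_Suc)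
  qed
  show ?thesis using e1 e2 e3 kk unfolding W
    by (cases e; cases f; auto simp: Uf_def Vf_def numeral_eq_Suc)
qed



theorem proposition2:
  fixes \<sigma> :: "real \<Rightarrow> real"
  assumes incr: "strict_mono \<sigma>"
    and odd: "\<And>x. \<sigma> (- x) = - \<sigma> x"
    and homeo: "\<exists>\<tau>. homeomorphism UNIV UNIV \<sigma> \<tau>"
    and fix0: "(\<exists>\<epsilon>>0. \<forall>x. \<bar>x\<bar> < \<epsilon> \<longrightarrow> \<sigma> x = x) \<or> (\<forall>n::int. \<sigma> (of_int n) = of_int n)"
  shows "\<exists>\<pi>. \<pi> \<in> hom (Gamma \<sigma>) (Gamma id)
           \<and> \<pi> ` carrier (Gamma \<sigma>) = carrier (Gamma id)
           \<and> (\<forall>w. \<pi> (word_eval (Gamma \<sigma>) w (hmap \<sigma>) (vmap \<sigma>))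
                   = word_eval (Gamma id) w (hmap id) (vmap id))
           \<and> (let G = Gamma \<sigma>;
                  U = inv\<^bsub>G\<^esub> (vmap \<sigma>) \<otimes>\<^bsub>G\<^esub> hmap \<sigma>;
                  V = inv\<^bsub>G\<^esub> (hmap \<sigma>) \<otimes>\<^bsub>G\<^esub> vmap \<sigma> \<otimes>\<^bsub>G\<^esub> inv\<^bsub>G\<^esub> (hmap \<sigma>)
              in kernel G (Gamma id) \<pi>
                 = normal_closure G {V [^]\<^bsub>G\<^esub> (2::nat) \<otimes>\<^bsub>G\<^esub> U [^]\<^bsub>G\<^esub> (3::nat),
                                     V [^]\<^bsub>G\<^esub> (4::nat)})"
proof -
  have wd': "wfn id w1 = wfn id w2" if "wfn \<sigma> w1 = wfn \<sigma> w2" for w1 w2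
    using wd[OF agree_cond[OF incr fix0] that] .
  define \<pi> where "\<pi> g = wfn id (SOME w. g = wfn \<sigma> w)" for g
  have \<pi>w: "\<pi> (wfn \<sigma> w) = wfn id w" for w
  proof -
    have "wfn \<sigma> w = wfn \<sigma> (SOME w'. wfn \<sigma> w = wfn \<sigma> w')" by (rule someI[of _ w]) simp
    then show ?thesis unfolding \<pi>_def using wd' by metis
  qed
  have hom: "\<pi> \<in> hom (Gamma \<sigma>) (Gamma id)"
  proof (rule homI)
    fix g assume "g \<in> carrier (Gamma \<sigma>)"
    then obtain w where "g = wfn \<sigma> w" using Gamma_words by blast
    then show "\<pi> g \<in> carrier (Gamma id)" using \<pi>w wf_G by simp
  next
    fix g1 g2 assume "g1 \<in> carrier (Gamma \<sigma>)" "g2 \<in> carrier (Gamma \<sigma>)"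
    then obtain w1 w2 where w: "g1 = wfn \<sigma> w1" "g2 = wfn \<sigma> w2" using Gamma_words by blast
    have "g1 \<otimes>\<^bsub>Gamma \<sigma>\<^esub> g2 = wfn \<sigma> (w1 @ w2)"
      using w Gamma_mult[OF wf_G wf_G] by (simp add: wf_append)
    then show "\<pi> (g1 \<otimes>\<^bsub>Gamma \<sigma>\<^esub> g2) = \<pi> g1 \<otimes>\<^bsub>Gamma id\<^esub> \<pi> g2"
      using w \<pi>w[of "w1 @ w2"] \<pi>w[of w1] \<pi>w[of w2] Gamma_mult[OF wf_G wf_G] by (simp add: wf_append)
  qed
  have surj: "\<pi> ` carrier (Gamma \<sigma>) = carrier (Gamma id)"
  proof
    show "\<pi> ` carrier (Gamma \<sigma>) \<subseteq> carrier (Gamma id)" using hom by (auto simp: hom_def)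
    show "carrier (Gamma id) \<subseteq> \<pi> ` carrier (Gamma \<sigma>)"
    proof
      fix h assume "h \<in> carrier (Gamma id)"
      then obtain w where "h = wfn id w" using Gamma_words by blast
      then show "h \<in> \<pi> ` carrier (Gamma \<sigma>)" using \<pi>w wf_G by (metis image_eqI)
    qed
  qed
  have weq: "\<forall>w. \<pi> (word_eval (Gamma \<sigma>) w (hmap \<sigma>) (vmap \<sigma>)) = word_eval (Gamma id) w (hmap id) (vmap id)"
    by (simp add: word_eval_Gamma \<pi>w)
  interpret Gs: group "Gamma \<sigma>" by (rule group_Gamma)
  interpret Gi: group "Gamma id" by (rule group_Gamma)
  interpret ph: group_hom "Gamma \<sigma>" "Gamma id" \<pi>
    by (intro group_hom.intro group_hom_axioms.intro group_Gamma hom)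
  define U where "U = inv\<^bsub>Gamma \<sigma>\<^esub> (vmap \<sigma>) \<otimes>\<^bsub>Gamma \<sigma>\<^esub> hmap \<sigma>"
  define V where "V = inv\<^bsub>Gamma \<sigma>\<^esub> (hmap \<sigma>) \<otimes>\<^bsub>Gamma \<sigma>\<^esub> vmap \<sigma> \<otimes>\<^bsub>Gamma \<sigma>\<^esub> inv\<^bsub>Gamma \<sigma>\<^esub> (hmap \<sigma>)"
  define r1 where "r1 = V [^]\<^bsub>Gamma \<sigma>\<^esub> (2::nat) \<otimes>\<^bsub>Gamma \<sigma>\<^esub> U [^]\<^bsub>Gamma \<sigma>\<^esub> (3::nat)"
  define r2 where "r2 = V [^]\<^bsub>Gamma \<sigma>\<^esub> (4::nat)"
  define C where "C = {g \<otimes>\<^bsub>Gamma \<sigma>\<^esub> s \<otimes>\<^bsub>Gamma \<sigma>\<^esub> inv\<^bsub>Gamma \<sigma>\<^esub> g | g s. g \<in> carrier (Gamma \<sigma>) \<and> s \<in> {r1, r2}}"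
  define N where "N = normal_closure (Gamma \<sigma>) {r1, r2}"
  have N_def': "N = generate (Gamma \<sigma>) C" by (simp add: N_def C_def normal_closure_def)
  have hG: "hmap \<sigma> \<in> carrier (Gamma \<sigma>)" and vG: "vmap \<sigma> \<in> carrier (Gamma \<sigma>)" by (rule hmap_G, rule vmap_G)
  have UG: "U \<in> carrier (Gamma \<sigma>)" and VG: "V \<in> carrier (Gamma \<sigma>)" using hG vG by (simp_all add: U_def V_def)
  have r1G: "r1 \<in> carrier (Gamma \<sigma>)" and r2G: "r2 \<in> carrier (Gamma \<sigma>)" using UG VG by (simp_all add: r1_def r2_def)
  have \<pi>h: "\<pi> (hmap \<sigma>) = hmap id" using \<pi>w[of "[(LA,False)]"] by simp
  have \<pi>v: "\<pi> (vmap \<sigma>) = vmap id" using \<pi>w[of "[(LB,False)]"] by simp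
  have \<pi>U: "\<pi> U = Uf" using hG vG by (simp add: U_def \<pi>h \<pi>v U_Gid)
  have \<pi>V: "\<pi> V = Vf" using hG vG by (simp add: V_def \<pi>h \<pi>v V_Gid)
  have \<pi>r1: "\<pi> r1 = \<one>\<^bsub>Gamma id\<^esub>"
    using UG VG relgrp.R1[OF relgrp_Gid] by (simp add: r1_def ph.hom_nat_pow \<pi>U \<pi>V)
  have \<pi>r2: "\<pi> r2 = \<one>\<^bsub>Gamma id\<^esub>"
    using UG VG relgrp.R2[OF relgrp_Gid] by (simp add: r2_def ph.hom_nat_pow \<pi>V)
  have CG: "C \<subseteq> carrier (Gamma \<sigma>)" using r1G r2G by (auto simp: C_def)
  have C_ker: "C \<subseteq> kernel (Gamma \<sigma>) (Gamma id) \<pi>"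
  proof
    fix c assume "c \<in> C"
    then obtain g s where c: "c = g \<otimes>\<^bsub>Gamma \<sigma>\<^esub> s \<otimes>\<^bsub>Gamma \<sigma>\<^esub> inv\<^bsub>Gamma \<sigma>\<^esub> g"
      "g \<in> carrier (Gamma \<sigma>)" "s \<in> {r1, r2}" by (auto simp: C_def)
    have s: "s \<in> carrier (Gamma \<sigma>)" "\<pi> s = \<one>\<^bsub>Gamma id\<^esub>" using c(3) r1G r2G \<pi>r1 \<pi>r2 by auto
    show "c \<in> kernel (Gamma \<sigma>) (Gamma id) \<pi>"
      using c s by (simp add: kernel_def)
  qed
  have conjC: "g \<otimes>\<^bsub>Gamma \<sigma>\<^esub> c \<otimes>\<^bsub>Gamma \<sigma>\<^esub> inv\<^bsub>Gamma \<sigma>\<^esub> g \<in> C"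
    if cC: "c \<in> C" and gG: "g \<in> carrier (Gamma \<sigma>)" for c g
  proof -
    obtain g' s where c: "c = g' \<otimes>\<^bsub>Gamma \<sigma>\<^esub> s \<otimes>\<^bsub>Gamma \<sigma>\<^esub> inv\<^bsub>Gamma \<sigma>\<^esub> g'"
      "g' \<in> carrier (Gamma \<sigma>)" "s \<in> {r1, r2}" using cC by (auto simp: C_def)
    have s: "s \<in> carrier (Gamma \<sigma>)" using c(3) r1G r2G by auto
    have "g \<otimes>\<^bsub>Gamma \<sigma>\<^esub> c \<otimes>\<^bsub>Gamma \<sigma>\<^esub> inv\<^bsub>Gamma \<sigma>\<^esub> g =
          (g \<otimes>\<^bsub>Gamma \<sigma>\<^esub> g') \<otimes>\<^bsub>Gamma \<sigma>\<^esub> s \<otimes>\<^bsub>Gamma \<sigma>\<^esub> inv\<^bsub>Gamma \<sigma>\<^esub> (g \<otimes>\<^bsub>Gamma \<sigma>\<^esub> g')"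
      using c s gG by (simp add: Gs.inv_mult_group Gs.m_assoc)
    then show ?thesis using c gG unfolding C_def by blast
  qed
  have Nnormal: "N \<lhd> Gamma \<sigma>"
    unfolding N_def' by (rule Gs.normal_generateI[OF CG conjC])
  interpret NN: normal N "Gamma \<sigma>" by (rule Nnormal)
  have ker: "kernel (Gamma \<sigma>) (Gamma id) \<pi> = N"
  proof
    show "N \<subseteq> kernel (Gamma \<sigma>) (Gamma id) \<pi>"
      unfolding N_def' by (rule Gs.generate_subgroup_incl[OF C_ker ph.subgroup_kernel])
  next
    show "kernel (Gamma \<sigma>) (Gamma id) \<pi> \<subseteq> N"
    proof
      fix x assume xk: "x \<in> kernel (Gamma \<sigma>) (Gamma id) \<pi>"
      hence xG: "x \<in> carrier (Gamma \<sigma>)" and \<pi>x: "\<pi> x = \<one>\<^bsub>Gamma id\<^esub>" by (auto simp: kernel_def)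
      obtain w where xw: "x = wfn \<sigma> w" using Gamma_words[OF xG] by blast
      obtain e k W f where nfw: "nf w = (e,k,W,f)" by (cases "nf w") auto
      have k: "k \<le> 2" using nf_k[of w] nfw by simp
      have "nf_eval (Gamma id) Uf Vf (nf w) = id"
        using \<pi>x xw \<pi>w relgrp.word_nf[OF relgrp_Gid, of w] word_eval_Gamma[of id w]
        by (simp add: Gamma_one)
      hence "nf_eval (Gamma id) Uf Vf (e,k,W,f) = id" using nfw by simp
      hence triv: "nf w = (False,0,[],False)" using nf_trivial[OF _ k] nfw by blast
      define K where "K = Gamma \<sigma> Mod N"
      define \<phi> where "\<phi> = (\<lambda>a. N #>\<^bsub>Gamma \<sigma>\<^esub> a)"
      have gK: "group K" unfolding K_def by (rule NN.factorgroup_is_group)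
      have phom: "group_hom (Gamma \<sigma>) K \<phi>"
        unfolding K_def \<phi>_def
        by (intro group_hom.intro group_hom_axioms.intro group_Gamma NN.factorgroup_is_group NN.r_coset_hom_Mod)
      interpret P: group_hom "Gamma \<sigma>" K \<phi> by (rule phom)
      have r1N: "r1 \<in> N"
      proof -
        have "\<one>\<^bsub>Gamma \<sigma>\<^esub> \<otimes>\<^bsub>Gamma \<sigma>\<^esub> r1 \<otimes>\<^bsub>Gamma \<sigma>\<^esub> inv\<^bsub>Gamma \<sigma>\<^esub> \<one>\<^bsub>Gamma \<sigma>\<^esub> \<in> C"
          unfolding C_def by blast
        thus ?thesis using r1G unfolding N_def' by (simp add: generate.incl)
      qed
      have r2N: "r2 \<in> N"
      proof -
        have "\<one>\<^bsub>Gamma \<sigma>\<^esub> \<otimes>\<^bsub>Gamma \<sigma>\<^esub> r2 \<otimes>\<^bsub>Gamma \<sigma>\<^esub> inv\<^bsub>Gamma \<sigma>\<^esub> \<one>\<^bsub>Gamma \<sigma>\<^esub> \<in> C"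
          unfolding C_def by blast
        thus ?thesis using r2G unfolding N_def' by (simp add: generate.incl)
      qed
      have one_K: "\<one>\<^bsub>K\<^esub> = N" by (simp add: K_def)
      have \<phi>r1: "\<phi> r1 = \<one>\<^bsub>K\<^esub>" unfolding one_K \<phi>_def
        by (rule Gs.coset_join2[OF r1G NN.subgroup_axioms r1N])
      have \<phi>r2: "\<phi> r2 = \<one>\<^bsub>K\<^esub>" unfolding one_K \<phi>_def
        by (rule Gs.coset_join2[OF r2G NN.subgroup_axioms r2N])
      have rg: "relgrp K (\<phi> (hmap \<sigma>)) (\<phi> (vmap \<sigma>)) (\<phi> U) (\<phi> V)"
      proof (intro relgrp.intro relgrp_axioms.intro gK)
        show "\<phi> (hmap \<sigma>) \<in> carrier K" "\<phi> (vmap \<sigma>) \<in> carrier K" using hG vG by simp_all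
        show "\<phi> U = inv\<^bsub>K\<^esub> \<phi> (vmap \<sigma>) \<otimes>\<^bsub>K\<^esub> \<phi> (hmap \<sigma>)" using hG vG by (simp add: U_def)
        show "\<phi> V = inv\<^bsub>K\<^esub> \<phi> (hmap \<sigma>) \<otimes>\<^bsub>K\<^esub> \<phi> (vmap \<sigma>) \<otimes>\<^bsub>K\<^esub> inv\<^bsub>K\<^esub> \<phi> (hmap \<sigma>)"
          using hG vG by (simp add: V_def)
        show "\<phi> V [^]\<^bsub>K\<^esub> (2::nat) \<otimes>\<^bsub>K\<^esub> \<phi> U [^]\<^bsub>K\<^esub> (3::nat) = \<one>\<^bsub>K\<^esub>"
          using UG VG \<phi>r1 by (simp add: r1_def P.hom_nat_pow)
        show "\<phi> V [^]\<^bsub>K\<^esub> (4::nat) = \<one>\<^bsub>K\<^esub>"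
          using VG \<phi>r2 by (simp add: r2_def P.hom_nat_pow)
      qed
      have "\<phi> x = word_eval K w (\<phi> (hmap \<sigma>)) (\<phi> (vmap \<sigma>))"
        using hom_word_eval[OF phom hG vG, of w] word_eval_Gamma[of \<sigma> w] xw by simp
      also have "\<dots> = nf_eval K (\<phi> U) (\<phi> V) (nf w)" by (rule relgrp.word_nf[OF rg])
      also have "\<dots> = \<one>\<^bsub>K\<^esub>"
        using UG VG by (simp add: triv nf_eval_def)
      finally have "N #>\<^bsub>Gamma \<sigma>\<^esub> x = N" unfolding \<phi>_def one_K .
      then show "x \<in> N" using Gs.rcos_self[OF xG NN.subgroup_axioms] by simp
    qed
  qed
  show ?thesis
    by (rule exI[of _ \<pi>]) (simp add: hom surj weq Let_def ker[unfolded N_def] r1_def r2_def U_def V_def)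
qed


end
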